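(* Let $k\ge 2$ and $L\ge k$ be integers, and let $z$ be a (complex) fugacity. For a boundary tuple $S=(h_1,\dots,h_k)$ with each $h_i\in\{0,1,\dots,k-1\}$, let $Z_{L,k}(z,S)$ denote the partition function of $k$-mers on the width-$k$ strip with extended right boundary $S$, as defined in the context. Suppose at least one $h_i\neq 0$. Then for every permutation $\sigma$ of $\{1,\dots,k\}$, with $S'=(h_{\sigma(1)},\dots,h_{\sigma(k)})$, we have $$Z_{L,k}(z,S)=Z_{L,k}(z,S').$$
   Context: Consider the strip of lattice sites $(i,x)$ with rows $i\in\{1,\dots,k\}$ and columns $x\in\{1,2,\dots\}$. A $k$-mer is a set of $k$ consecutive sites in a straight line, either horizontal (same row $i$, columns $x,x+1,\dots,x+k-1$) or vertical (same column $x$, all rows $1,\dots,k$). A configuration is a set of $k$-mers no two of which share a site (sites may be left empty). Given $S=(h_1,\dots,h_k)$ with $h_i\in\{0,\dots,k-1\}$, the region is $R_S=\{(i,x): 1\le i\le k,\ 1\le x\le L+h_i\}$. Here $h_i$ is the number of sites to the right of the site $(i,L)$ in row $i$ that are occupied by the horizontal $k$-mer covering $(i,L)$: if $h_i=0$, the row $i$ contains no sites beyond column $L$; if $h_i\ge1$, the configuration is required to contain the horizontal $k$-mer in row $i$ occupying columns $L+h_i-k+1,\dots,L+h_i$ (which covers $(i,L)$). $Z_{L,k}(z,S)$ is the sum, over all configurations of $k$-mers contained in $R_S$ satisfying these requirements, of $z^{N}$, where $N$ is the number of $k$-mers in the configuration. *)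

theory Defs
  imports Complex_Main "HOL-Combinatorics.Permutations"
begin

text \<open>Sites are pairs (row i, column x). Rows 1..k, columns 1,2,...\<close>

definition hmer :: "nat \<Rightarrow> nat \<Rightarrow> nat \<Rightarrow> (nat \<times> nat) set" where
  "hmer k i x = {(i, x + j) | j. j < k}"

definition vmer :: "nat \<Rightarrow> nat \<Rightarrow> (nat \<times> nat) set" where
  "vmer k x = {(i, x) | i. 1 \<le> i \<and> i \<le> k}"

definition kmers :: "nat \<Rightarrow> (nat \<times> nat) set set" where
  "kmers k = {hmer k i x | i x. 1 \<le> i \<and> i \<le> k \<and> 1 \<le> x} \<union> {vmer k x | x. 1 \<le> x}"

text \<open>Region R_S; the boundary tuple S = (h_1,...,h_k) is the function h restricted to {1..k}.\<close>
definition region :: "nat \<Rightarrow> nat \<Rightarrow> (nat \<Rightarrow> nat) \<Rightarrow> (nat \<times> nat) set" where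
  "region k L h = {(i, x). 1 \<le> i \<and> i \<le> k \<and> 1 \<le> x \<and> x \<le> L + h i}"

definition configs :: "nat \<Rightarrow> nat \<Rightarrow> (nat \<Rightarrow> nat) \<Rightarrow> (nat \<times> nat) set set set" where
  "configs k L h = {C. C \<subseteq> kmers k \<and> (\<forall>A\<in>C. A \<subseteq> region k L h) \<and> pairwise disjnt C \<and>
      (\<forall>i\<in>{1..k}. 1 \<le> h i \<longrightarrow> hmer k i (L + h i + 1 - k) \<in> C)}"

definition Zpart :: "nat \<Rightarrow> nat \<Rightarrow> complex \<Rightarrow> (nat \<Rightarrow> nat) \<Rightarrow> complex" where
  "Zpart L k z h = (\<Sum>C\<in>configs k L h. z ^ card C)"

end

theory Submission
  imports Defs
begin

definition rowmap :: "(nat \<Rightarrow> nat) \<Rightarrow> nat \<times> nat \<Rightarrow> nat \<times> nat" where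
  "rowmap p s = (p (fst s), snd s)"

lemma rowmap_inj: "p permutes A \<Longrightarrow> inj (rowmap p)"
  unfolding inj_def rowmap_def
  by (metis permutes_inj injD prod.collapse prod.inject)

lemma hmer_img: "rowmap p ` hmer k i x = hmer k (p i) x"
  unfolding hmer_def rowmap_def by (auto simp: image_iff)

lemma vmer_img: assumes "p permutes {1..k}" shows "rowmap p ` vmer k x = vmer k x"
proof -
  have "p ` {1..k} = {1..k}" using assms permutes_image by blast
  then have a: "\<And>i. 1 \<le> i \<and> i \<le> k \<Longrightarrow> 1 \<le> p i \<and> p i \<le> k"
    and b: "\<And>i. 1 \<le> i \<and> i \<le> k \<Longrightarrow> \<exists>j. 1 \<le> j \<and> j \<le> k \<and> i = p j"
    by (metis atLeastAtMost_iff imageI, metis atLeastAtMost_iff image_iff)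
  show ?thesis unfolding vmer_def rowmap_def
  proof (intro equalityI subsetI)
    fix s assume "s \<in> (\<lambda>s. (p (fst s), snd s)) ` {(i, x) |i. 1 \<le> i \<and> i \<le> k}"
    then show "s \<in> {(i, x) |i. 1 \<le> i \<and> i \<le> k}" using a by auto
  next
    fix s assume "s \<in> {(i, x) |i. 1 \<le> i \<and> i \<le> k}"
    then obtain i where "s = (i, x)" "1 \<le> i \<and> i \<le> k" by auto
    then obtain j where "1 \<le> j \<and> j \<le> k" "i = p j" using b by blast
    then show "s \<in> (\<lambda>s. (p (fst s), snd s)) ` {(i, x) |i. 1 \<le> i \<and> i \<le> k}"
      using \<open>s = (i, x)\<close> by (auto simp: image_iff)
  qed
qed

lemma config_map:
  assumes p: "p permutes {1..k}" and C: "C \<in> configs k L h"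
  shows "(`) (rowmap p) ` C \<in> configs k L (h \<circ> inv p)"
proof -
  have inv1: "\<And>i. inv p (p i) = i" using p permutes_inverses(2) by metis
  have inv2: "\<And>i. p (inv p i) = i" using p permutes_inverses(1) by metis
  have pin: "\<And>i. i \<in> {1..k} \<Longrightarrow> p i \<in> {1..k}" using p permutes_in_image by metis
  have ipin: "\<And>i. i \<in> {1..k} \<Longrightarrow> inv p i \<in> {1..k}"
    using permutes_inv[OF p] permutes_in_image by metis
  have inj: "inj (rowmap p)" using rowmap_inj[OF p] .
  have Cs: "C \<subseteq> kmers k" "\<forall>A\<in>C. A \<subseteq> region k L h" "pairwise disjnt C"
    "\<forall>i\<in>{1..k}. 1 \<le> h i \<longrightarrow> hmer k i (L + h i + 1 - k) \<in> C"
    using C unfolding configs_def by auto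
  have k1: "(`) (rowmap p) ` C \<subseteq> kmers k"
  proof
    fix B assume "B \<in> (`) (rowmap p) ` C"
    then obtain A where A: "A \<in> C" "B = rowmap p ` A" by auto
    then have "A \<in> kmers k" using Cs(1) by auto
    then have "A \<in> {hmer k i x |i x. 1 \<le> i \<and> i \<le> k \<and> 1 \<le> x} \<union> {vmer k x |x. 1 \<le> x}"
      unfolding kmers_def .
    then show "B \<in> kmers k"
    proof (elim UnE)
      assume "A \<in> {hmer k i x |i x. 1 \<le> i \<and> i \<le> k \<and> 1 \<le> x}"
      then obtain i x where "A = hmer k i x" "i \<in> {1..k}" "1 \<le> x" by auto
      then show ?thesis using A pin[of i] hmer_img[of p k i x] unfolding kmers_def by fastforce
    next
      assume "A \<in> {vmer k x |x. 1 \<le> x}"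
      then obtain x where "A = vmer k x" "1 \<le> x" by auto
      then show ?thesis using A vmer_img[OF p, of x] unfolding kmers_def by auto
    qed
  qed
  have k2: "\<forall>B\<in>(`) (rowmap p) ` C. B \<subseteq> region k L (h \<circ> inv p)"
  proof (intro ballI subsetI)
    fix B s assume "B \<in> (`) (rowmap p) ` C" "s \<in> B"
    then obtain A t where "A \<in> C" "t \<in> A" "s = rowmap p t" by auto
    then have "t \<in> region k L h" using Cs(2) by auto
    then show "s \<in> region k L (h \<circ> inv p)"
      using \<open>s = rowmap p t\<close> pin[of "fst t"] inv1[of "fst t"]
      unfolding region_def rowmap_def by auto
  qed
  have k3: "pairwise disjnt ((`) (rowmap p) ` C)"
    using Cs(3) inj unfolding pairwise_def disjnt_def
    by (smt (verit, ccfv_threshold) image_empty image_iff image_Int)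
  have k4: "\<forall>i\<in>{1..k}. 1 \<le> (h \<circ> inv p) i \<longrightarrow>
      hmer k i (L + (h \<circ> inv p) i + 1 - k) \<in> (`) (rowmap p) ` C"
  proof (intro ballI impI)
    fix i assume i: "i \<in> {1..k}" "1 \<le> (h \<circ> inv p) i"
    then have "hmer k (inv p i) (L + h (inv p i) + 1 - k) \<in> C" using Cs(4) ipin by auto
    then have "rowmap p ` hmer k (inv p i) (L + h (inv p i) + 1 - k) \<in> (`) (rowmap p) ` C" by auto
    then show "hmer k i (L + (h \<circ> inv p) i + 1 - k) \<in> (`) (rowmap p) ` C"
      by (simp add: hmer_img inv2)
  qed
  show ?thesis unfolding configs_def using k1 k2 k3 k4 by blast
qed

theorem lemma1:
  fixes k L :: nat and z :: complex and h :: "nat \<Rightarrow> nat" and \<sigma> :: "nat \<Rightarrow> nat"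
  assumes "k \<ge> 2" and "L \<ge> k"
    and "\<forall>i\<in>{1..k}. h i < k"
    and "\<exists>i\<in>{1..k}. h i \<noteq> 0"
    and "\<sigma> permutes {1..k}"
  shows "Zpart L k z h = Zpart L k z (h \<circ> \<sigma>)"
proof -
  have s: "\<sigma> permutes {1..k}" by fact
  have si: "inv \<sigma> permutes {1..k}" using permutes_inv[OF s] .
  have ii: "inv (inv \<sigma>) = \<sigma>" using s by (simp add: permutes_inv_inv)
  define F where "F = (`) ((`) (rowmap (inv \<sigma>)))"
  define G where "G = (`) ((`) (rowmap \<sigma>))"
  have injr: "inj (rowmap (inv \<sigma>))" using rowmap_inj[OF si] .
  have comp: "rowmap \<sigma> \<circ> rowmap (inv \<sigma>) = id"
    using s by (auto simp: rowmap_def fun_eq_iff permutes_inverses)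
  have GF: "G (F C) = C" for C
  proof -
    have "rowmap \<sigma> ` (rowmap (inv \<sigma>) ` A) = A" for A
      using comp by (simp add: image_comp)
    then show ?thesis unfolding G_def F_def image_image by simp
  qed
  have injF: "inj_on F (configs k L h)" by (metis GF inj_on_inverseI)
  have Fin: "F C \<in> configs k L (h \<circ> \<sigma>)" if "C \<in> configs k L h" for C
    using config_map[OF si that] ii unfolding F_def by simp
  have Gin: "G D \<in> configs k L h" if "D \<in> configs k L (h \<circ> \<sigma>)" for D
    using config_map[OF s that] s unfolding G_def
    by (simp add: comp_assoc permutes_inv_o(1))
  have FG: "F (G D) = D" for D
  proof -
    have "rowmap (inv \<sigma>) \<circ> rowmap \<sigma> = id"
      using s by (auto simp: rowmap_def fun_eq_iff permutes_inverses)
    then have "rowmap (inv \<sigma>) ` (rowmap \<sigma> ` A) = A" for A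
      by (simp add: image_comp)
    then show ?thesis unfolding G_def F_def image_image by simp
  qed
  have img: "F ` configs k L h = configs k L (h \<circ> \<sigma>)"
    using Fin Gin FG by (metis image_eqI subsetI subset_antisym image_subsetI)
  have cardF: "card (F C) = card C" for C
  proof -
    have "inj_on ((`) (rowmap (inv \<sigma>))) C"
      using injr by (meson inj_image_eq_iff inj_onI)
    then show ?thesis unfolding F_def by (simp add: card_image)
  qed
  have "Zpart L k z (h \<circ> \<sigma>) = (\<Sum>C\<in>F ` configs k L h. z ^ card C)"
    unfolding Zpart_def img ..
  also have "\<dots> = (\<Sum>C\<in>configs k L h. z ^ card (F C))"
    by (rule sum.reindex[OF injF, unfolded o_def])
  also have "\<dots> = Zpart L k z h" unfolding Zpart_def cardF ..
  finally show ?thesis by simp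
qed

end
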